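(* Let $\Omega\subset\mathbb{C}$ be a simply connected domain, let $(h,\mathcal{M},\mathcal{N})$ be a Weierstrass data of the second kind on $\Omega$, and let $\tau\in\mathbb{R}$. Set $h_\tau:=e^{-i\tau}h$ and $\mathcal{N}_\tau:=\mathcal{N}$. Then there exists a $\mathcal{C}^2$ function $\mathcal{M}_\tau:\Omega\to\mathbb{R}$ satisfying $$(\mathcal{M}_\tau)_z=e^{i\tau}\mathcal{M}_z-\frac{e^{i\tau}-e^{-i\tau}}{2}\,h\,\mathcal{N}_z,$$ and for any such $\mathcal{M}_\tau$ the triple $(h_\tau,\mathcal{M}_\tau,\mathcal{N}_\tau)$ is a Weierstrass data of the second kind on $\Omega$.
   Context: $\Omega\subset\mathbb{R}^2\equiv\mathbb{C}$ has complex coordinate $z=u+iv$, and $\partial_z=\frac12(\partial_u-i\partial_v)$, $\partial_{\overline z}=\frac12(\partial_u+i\partial_v)$; subscripts denote partial derivatives. A Weierstrass data of the second kind on $\Omega$ is a triple $(h,\mathcal{M},\mathcal{N})$ where $h:\Omega\to\mathbb{C}\setminus\{0\}$ and $\mathcal{M},\mathcal{N}:\Omega\to\mathbb{R}$ are $\mathcal{C}^2$, satisfying $h_{\overline z}=0$, $\mathcal{M}_{z\overline z}=(\mathrm{Re}\,h)\,\mathcal{N}_{z\overline z}$, and $\mathcal{M}_z-(\mathrm{Re}\,h)\,\mathcal{N}_z\neq0$ at every point of $\Omega$. *)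

theory Defs
  imports "HOL-Analysis.Analysis"
begin

text \<open>With w = 1 this is the u-derivative, with w = i
  the v-derivative (z = u + i v).\<close>
definition pd :: "(complex \<Rightarrow> 'a::real_normed_vector) \<Rightarrow> complex \<Rightarrow> complex \<Rightarrow> 'a" where
  "pd f w z = frechet_derivative f (at z) w"

definition Dz :: "(complex \<Rightarrow> complex) \<Rightarrow> complex \<Rightarrow> complex" where
  "Dz f z = (pd f 1 z - \<i> * pd f \<i> z) / 2"

definition Dzbar :: "(complex \<Rightarrow> complex) \<Rightarrow> complex \<Rightarrow> complex" where
  "Dzbar f z = (pd f 1 z + \<i> * pd f \<i> z) / 2"

definition C2_on :: "complex set \<Rightarrow> (complex \<Rightarrow> 'a::real_normed_vector) \<Rightarrow> bool" where
  "C2_on \<Omega> f \<longleftrightarrow>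
     f differentiable_on \<Omega> \<and>
     (\<forall>w \<in> {1, \<i>}. (\<lambda>z. pd f w z) differentiable_on \<Omega>) \<and>
     (\<forall>w \<in> {1, \<i>}. \<forall>w' \<in> {1, \<i>}. continuous_on \<Omega> (\<lambda>z. pd (\<lambda>x. pd f w x) w' z))"

definition weierstrass_data_2 ::
  "complex set \<Rightarrow> (complex \<Rightarrow> complex) \<Rightarrow> (complex \<Rightarrow> real) \<Rightarrow> (complex \<Rightarrow> real) \<Rightarrow> bool" where
  "weierstrass_data_2 \<Omega> h M N \<longleftrightarrow>
     C2_on \<Omega> h \<and> C2_on \<Omega> M \<and> C2_on \<Omega> N \<and>
     (\<forall>z \<in> \<Omega>. h z \<noteq> 0) \<and>
     (\<forall>z \<in> \<Omega>. Dzbar h z = 0) \<and>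
     (\<forall>z \<in> \<Omega>. Dzbar (Dz (\<lambda>x. complex_of_real (M x))) z
                = complex_of_real (Re (h z)) * Dzbar (Dz (\<lambda>x. complex_of_real (N x))) z) \<and>
     (\<forall>z \<in> \<Omega>. Dz (\<lambda>x. complex_of_real (M x)) z
                - complex_of_real (Re (h z)) * Dz (\<lambda>x. complex_of_real (N x)) z \<noteq> 0)"

end

theory Submission imports Defs "HOL-Complex_Analysis.Riemann_Mapping" begin

lemma pd_at: "(f has_derivative f') (at z) \<Longrightarrow> pd f w z = f' w"
  by (simp add: pd_def frechet_derivative_at[symmetric])

lemma pd_cong:
  assumes "open S" "z \<in> S" "\<And>x. x \<in> S \<Longrightarrow> f x = g x"
  shows "pd f w z = pd g w z"
proof -
  have "\<And>D. (f has_derivative D) (at z) \<longleftrightarrow> (g has_derivative D) (at z)"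
    using assms has_derivative_transform_within_open[of _ _ z UNIV S] by metis
  then show ?thesis unfolding pd_def frechet_derivative_def by simp
qed

lemma diff_cong:
  assumes "open S" "z \<in> S" "\<And>x. x \<in> S \<Longrightarrow> f x = g x" "f differentiable (at z)"
  shows "g differentiable (at z)"
  using assms has_derivative_transform_within_open[of f _ z UNIV S g] unfolding differentiable_def by blast

lemma complex_lin:
  fixes L :: "complex \<Rightarrow> 'a::real_normed_vector"
  assumes "linear L"
  shows "L w = Re w *\<^sub>R L 1 + Im w *\<^sub>R L \<i>"
proof -
  have "w = Re w *\<^sub>R 1 + Im w *\<^sub>R \<i>" by (simp add: complex_eq_iff)
  then have "L w = L (Re w *\<^sub>R 1 + Im w *\<^sub>R \<i>)" by simp
  also have "\<dots> = Re w *\<^sub>R L 1 + Im w *\<^sub>R L \<i>"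
    using assms by (simp add: linear_add linear_scale)
  finally show ?thesis .
qed

lemma wirt_of_diff:
  fixes f :: "complex \<Rightarrow> complex"
  assumes "f differentiable (at z)"
  shows "(f has_derivative (\<lambda>w. Dz f z * w + Dzbar f z * cnj w)) (at z)"
proof -
  obtain f' where D: "(f has_derivative f') (at z)" using assms unfolding differentiable_def by blast
  then have lin: "linear f'" using has_derivative_linear by blast
  have eq: "f' w = Dz f z * w + Dzbar f z * cnj w" for w
  proof -
    have e1: "f' w = Re w *\<^sub>R f' 1 + Im w *\<^sub>R f' \<i>" using complex_lin[OF lin] .
    have d1: "Dz f z = (f' 1 - \<i> * f' \<i>)/2" and d2: "Dzbar f z = (f' 1 + \<i> * f' \<i>)/2"
      using pd_at[OF D] by (simp_all add: Dz_def Dzbar_def)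
    show ?thesis unfolding e1 d1 d2
      by (simp add: complex_eq_iff scaleR_conv_of_real field_simps)
  qed
  show ?thesis using D by (rule has_derivative_eq_rhs) (use eq in auto)
qed

lemma wirt_D:
  fixes f :: "complex \<Rightarrow> complex"
  assumes "(f has_derivative (\<lambda>w. a * w + b * cnj w)) (at z)"
  shows "Dz f z = a" "Dzbar f z = b"
  using pd_at[OF assms] by (simp_all add: Dz_def Dzbar_def algebra_simps)


lemma schwarz_aux:
  fixes F G :: "complex \<Rightarrow> real"
  assumes S: "open S" "z0 \<in> S"
    and DF: "\<And>x. x \<in> S \<Longrightarrow> (F has_derivative DF x) (at x)"
    and Ga: "\<And>x. x \<in> S \<Longrightarrow> DF x a = G x"
    and na: "norm a = 1" and nb: "norm b = 1"
    and GL: "(G has_derivative L) (at z0)"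
    and e: "e > 0"
  shows "\<exists>d>0. \<forall>s. 0 < s \<and> s < d \<longrightarrow>
     \<bar>F (z0 + s *\<^sub>R a + s *\<^sub>R b) - F (z0 + s *\<^sub>R a) - F (z0 + s *\<^sub>R b) + F z0 - s^2 * L b\<bar> \<le> 3 * e * s^2"
proof -
  obtain d1 where d1: "d1 > 0" "\<And>y. norm (y - z0) < d1 \<Longrightarrow> norm (G y - G z0 - L (y - z0)) \<le> e * norm (y - z0)"
    using GL e unfolding has_derivative_at_alt by blast
  have bl: "bounded_linear L" using GL has_derivative_bounded_linear by blast
  then have lin: "linear L" by (rule bounded_linear.linear)
  obtain r where r: "r > 0" "ball z0 r \<subseteq> S" using S open_contains_ball by blast
  define d where "d = min d1 r / 2"
  have d: "d > 0" using d1 r by (simp add: d_def)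
  show ?thesis
  proof (intro exI[of _ d] conjI allI impI)
    show "d > 0" by (rule d)
    fix s :: real assume s: "0 < s \<and> s < d"
    define \<phi> where "\<phi> t = F (z0 + t *\<^sub>R a + s *\<^sub>R b) - F (z0 + t *\<^sub>R a)" for t
    have inS: "z0 + t *\<^sub>R a + u *\<^sub>R b \<in> S" if "0 \<le> t" "t \<le> s" "0 \<le> u" "u \<le> s" for t u
    proof -
      have "norm (t *\<^sub>R a + u *\<^sub>R b) \<le> norm (t *\<^sub>R a) + norm (u *\<^sub>R b)" by (rule norm_triangle_ineq)
      also have "\<dots> = t + u" using that na nb by simp
      finally have "norm (t *\<^sub>R a + u *\<^sub>R b) < r" using s that d_def by linarith
      moreover have "dist z0 (z0 + t *\<^sub>R a + u *\<^sub>R b) = norm (t *\<^sub>R a + u *\<^sub>R b)"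
        by (metis add.assoc add_diff_cancel_left' dist_commute dist_norm)
      ultimately have "z0 + t *\<^sub>R a + u *\<^sub>R b \<in> ball z0 r" by simp
      then show ?thesis using r by blast
    qed
    have normle: "norm (t *\<^sub>R a + u *\<^sub>R b) \<le> t + u" if "0 \<le> t" "0 \<le> u" for t u
    proof -
      have "norm (t *\<^sub>R a + u *\<^sub>R b) \<le> norm (t *\<^sub>R a) + norm (u *\<^sub>R b)" by (rule norm_triangle_ineq)
      also have "\<dots> = t + u" using that na nb by simp
      finally show ?thesis .
    qed
    have linDF: "linear (DF x)" if "x \<in> S" for x
      using DF[OF that] has_derivative_linear by blast
    have der: "(\<phi> has_derivative (\<lambda>h. h * (G (z0 + t *\<^sub>R a + s *\<^sub>R b) - G (z0 + t *\<^sub>R a)))) (at t within {0..s})"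
      if "0 \<le> t" "t \<le> s" for t
    proof -
      have i1: "z0 + t *\<^sub>R a + s *\<^sub>R b \<in> S" using inS[of t s] that s by simp
      have i2: "z0 + t *\<^sub>R a \<in> S" using inS[of t 0] that s by simp
      have c1: "((\<lambda>t. F (z0 + t *\<^sub>R a + s *\<^sub>R b)) has_derivative (\<lambda>h. DF (z0 + t *\<^sub>R a + s *\<^sub>R b) (h *\<^sub>R a))) (at t within {0..s})"
        by (rule has_derivative_compose[of "\<lambda>t. z0 + t *\<^sub>R a + s *\<^sub>R b" _ _ _ F, simplified o_def])
           (auto intro!: derivative_eq_intros has_derivative_at_withinI[OF DF[OF i1]])
      have c2: "((\<lambda>t. F (z0 + t *\<^sub>R a)) has_derivative (\<lambda>h. DF (z0 + t *\<^sub>R a) (h *\<^sub>R a))) (at t within {0..s})"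
        by (rule has_derivative_compose[of "\<lambda>t. z0 + t *\<^sub>R a" _ _ _ F, simplified o_def])
           (auto intro!: derivative_eq_intros has_derivative_at_withinI[OF DF[OF i2]])
      show ?thesis unfolding \<phi>_def
        using has_derivative_diff[OF c1 c2]
        by (rule has_derivative_eq_rhs)
           (simp add: fun_eq_iff linear_scale[OF linDF[OF i1]] linear_scale[OF linDF[OF i2]] Ga[OF i1] Ga[OF i2] right_diff_distrib)
    qed
    obtain \<theta> where th: "\<theta> \<in> {0<..<s}"
      and mv: "\<phi> s - \<phi> 0 = (s - 0) * (G (z0 + \<theta> *\<^sub>R a + s *\<^sub>R b) - G (z0 + \<theta> *\<^sub>R a))"
      using mvt_simple[of 0 s \<phi>, OF _ der] s by auto
    define y1 where "y1 = z0 + \<theta> *\<^sub>R a + s *\<^sub>R b"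
    define y2 where "y2 = z0 + \<theta> *\<^sub>R a"
    have n1: "norm (y1 - z0) \<le> 2 * s" using normle[of \<theta> s] th by (simp add: y1_def)
    have n2: "norm (y2 - z0) \<le> s" using na th by (simp add: y2_def)
    have b1: "norm (G y1 - G z0 - L (y1 - z0)) \<le> e * (2 * s)"
    proof -
      have "norm (y1 - z0) < d1" using n1 s d_def by auto
      then have "norm (G y1 - G z0 - L (y1 - z0)) \<le> e * norm (y1 - z0)" by (rule d1(2))
      also have "\<dots> \<le> e * (2 * s)" using mult_left_mono[OF n1, of e] e by simp
      finally show ?thesis .
    qed
    have b2: "norm (G y2 - G z0 - L (y2 - z0)) \<le> e * s"
    proof -
      have "norm (y2 - z0) < d1" using n2 s d_def by auto
      then have "norm (G y2 - G z0 - L (y2 - z0)) \<le> e * norm (y2 - z0)" by (rule d1(2))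
      also have "\<dots> \<le> e * s" using mult_left_mono[OF n2, of e] e by simp
      finally show ?thesis .
    qed
    have Ldiff: "L (y1 - z0) - L (y2 - z0) = s * L b"
      by (simp add: y1_def y2_def linear_add[OF lin] linear_scale[OF lin])
    have "\<bar>G y1 - G y2 - s * L b\<bar> \<le> 3 * e * s"
    proof -
      have "G y1 - G y2 - s * L b = (G y1 - G z0 - L (y1 - z0)) - (G y2 - G z0 - L (y2 - z0))"
        using Ldiff by simp
      then show ?thesis using b1 b2 by simp
    qed
    then have "\<bar>s * (G y1 - G y2) - s^2 * L b\<bar> \<le> s * (3 * e * s)"
    proof -
      have "s * (G y1 - G y2) - s^2 * L b = s * (G y1 - G y2 - s * L b)"
        by (simp add: power2_eq_square algebra_simps)
      then have "\<bar>s * (G y1 - G y2) - s^2 * L b\<bar> = s * \<bar>G y1 - G y2 - s * L b\<bar>"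
        using s by (simp add: abs_mult)
      then show ?thesis using mult_left_mono[OF \<open>\<bar>G y1 - G y2 - s * L b\<bar> \<le> 3 * e * s\<close>, of s] s by simp
    qed
    moreover have "\<phi> s - \<phi> 0 = F (z0 + s *\<^sub>R a + s *\<^sub>R b) - F (z0 + s *\<^sub>R a) - F (z0 + s *\<^sub>R b) + F z0"
      by (simp add: \<phi>_def)
    ultimately show "\<bar>F (z0 + s *\<^sub>R a + s *\<^sub>R b) - F (z0 + s *\<^sub>R a) - F (z0 + s *\<^sub>R b) + F z0 - s^2 * L b\<bar> \<le> 3 * e * s^2"
      using mv by (simp add: y1_def y2_def power2_eq_square algebra_simps)
  qed
qed

lemma schwarz:
  fixes F F1 F2 :: "complex \<Rightarrow> real"
  assumes S: "open S" "z0 \<in> S"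
    and DF: "\<And>x. x \<in> S \<Longrightarrow> (F has_derivative (\<lambda>w. Re w * F1 x + Im w * F2 x)) (at x)"
    and L1: "(F1 has_derivative L1) (at z0)" and L2: "(F2 has_derivative L2) (at z0)"
  shows "L1 \<i> = L2 1"
proof -
  have bound: "\<bar>L1 \<i> - L2 1\<bar> \<le> 6 * e" if e: "e > 0" for e
  proof -
    obtain d1 where d1: "d1 > 0" "\<And>s. 0 < s \<and> s < d1 \<Longrightarrow>
       \<bar>F (z0 + s *\<^sub>R 1 + s *\<^sub>R \<i>) - F (z0 + s *\<^sub>R 1) - F (z0 + s *\<^sub>R \<i>) + F z0 - s^2 * L1 \<i>\<bar> \<le> 3 * e * s^2"
      using schwarz_aux[OF S DF _ _ _ L1 e, of 1 \<i>] by auto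
    obtain d2 where d2: "d2 > 0" "\<And>s. 0 < s \<and> s < d2 \<Longrightarrow>
       \<bar>F (z0 + s *\<^sub>R \<i> + s *\<^sub>R 1) - F (z0 + s *\<^sub>R \<i>) - F (z0 + s *\<^sub>R 1) + F z0 - s^2 * L2 1\<bar> \<le> 3 * e * s^2"
      using schwarz_aux[OF S DF _ _ _ L2 e, of \<i> 1] by auto
    define s where "s = min d1 d2 / 2"
    have s: "0 < s" "s < d1" "s < d2" using d1 d2 by (auto simp: s_def)
    have eq: "z0 + s *\<^sub>R \<i> + s *\<^sub>R 1 = z0 + s *\<^sub>R 1 + s *\<^sub>R \<i>" by (simp add: algebra_simps)
    have "\<bar>s^2 * (L1 \<i> - L2 1)\<bar> \<le> 3 * e * s^2 + 3 * e * s^2"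
      using d1(2)[of s] d2(2)[of s] s unfolding eq by (simp add: algebra_simps abs_le_iff) 
    moreover have "\<bar>s^2 * (L1 \<i> - L2 1)\<bar> = s^2 * \<bar>L1 \<i> - L2 1\<bar>" by (simp add: abs_mult)
    ultimately have "s^2 * \<bar>L1 \<i> - L2 1\<bar> \<le> s^2 * (6 * e)" by (simp add: algebra_simps)
    then show ?thesis using s by simp
  qed
  show ?thesis
  proof (rule ccontr)
    assume "L1 \<i> \<noteq> L2 1"
    then have "\<bar>L1 \<i> - L2 1\<bar> > 0" by simp
    then show False using bound[of "\<bar>L1 \<i> - L2 1\<bar> / 12"] by simp
  qed
qed


definition RE :: "complex \<Rightarrow>\<^sub>L real" where "RE = Blinfun Re"

lemma RE_apply[simp]: "blinfun_apply RE w = Re w"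
  by (simp add: RE_def bounded_linear_Blinfun_apply bounded_linear_Re)

lemma star_primitive:
  fixes P \<alpha> \<beta> :: "complex \<Rightarrow> complex" and S :: "complex set"
  assumes S: "open S" and star: "\<And>z t. z \<in> S \<Longrightarrow> 0 \<le> t \<Longrightarrow> t \<le> 1 \<Longrightarrow> of_real t * z \<in> S"
    and DP: "\<And>z. z \<in> S \<Longrightarrow> (P has_derivative (\<lambda>w. \<alpha> z * w + \<beta> z * cnj w)) (at z)"
    and ca: "continuous_on S \<alpha>" and cb: "continuous_on S \<beta>"
    and rb: "\<And>z. z \<in> S \<Longrightarrow> Im (\<beta> z) = 0"
  shows "\<exists>g::complex\<Rightarrow>real. \<forall>z\<in>S. (g has_derivative (\<lambda>w. Re (P z * w))) (at z)"
proof -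
  have cP: "continuous_on S P"
    using DP has_derivative_continuous continuous_at_imp_continuous_on by blast
  define g where "g x = integral (cbox 0 1) (\<lambda>t::real. Re (P (of_real t * x) * x))" for x
  define K where "K x t = of_real t * \<alpha> (of_real t * x) * x + P (of_real t * x) + of_real t * \<beta> (of_real t * x) * cnj x" for x and t :: real
  define fx where "fx x t = RE o\<^sub>L blinfun_mult_right (K x t)" for x and t :: real
  have fx_apply: "blinfun_apply (fx x t) w = Re (K x t * w)" for x t w
    by (simp add: fx_def)
  have cK: "continuous_on (S \<times> cbox 0 1) (\<lambda>(x, t). K x t)"
  proof -
    have im: "(\<lambda>p. of_real (snd p) * fst p) ` (S \<times> cbox 0 1) \<subseteq> S"
      using star by auto
    have c0: "continuous_on (S \<times> cbox 0 1) (\<lambda>p::complex \<times> real. of_real (snd p) * fst p)"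
      by (intro continuous_intros)
    have ca': "continuous_on (S \<times> cbox 0 1) (\<lambda>p::complex \<times> real. \<alpha> (of_real (snd p) * fst p))"
      by (rule continuous_on_compose2[OF ca c0 im])
    have cb': "continuous_on (S \<times> cbox 0 1) (\<lambda>p::complex \<times> real. \<beta> (of_real (snd p) * fst p))"
      by (rule continuous_on_compose2[OF cb c0 im])
    have cP': "continuous_on (S \<times> cbox 0 1) (\<lambda>p::complex \<times> real. P (of_real (snd p) * fst p))"
      by (rule continuous_on_compose2[OF cP c0 im])
    show ?thesis unfolding K_def split_beta
      by (intro continuous_intros ca' cb' cP')
  qed
  have cfx: "continuous_on (S \<times> cbox 0 1) (\<lambda>(x, t). fx x t)"
    unfolding fx_def split_beta using cK unfolding split_beta
    by (intro continuous_intros)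
  show ?thesis
  proof (intro exI[of _ g] ballI)
    fix x0 assume x0: "x0 \<in> S"
    obtain r where r: "r > 0" "ball x0 r \<subseteq> S" using S x0 open_contains_ball by blast
    define U where "U = ball x0 r"
    have U: "convex U" "x0 \<in> U" "open U" "U \<subseteq> S" using r by (auto simp: U_def)
    have der1: "((\<lambda>x. Re (P (of_real t * x) * x)) has_derivative blinfun_apply (fx x t)) (at x within U)"
      if x: "x \<in> U" and t: "t \<in> cbox 0 1" for x t
    proof -
      have xS: "x \<in> S" using x U by auto
      have tS: "of_real t * x \<in> S" using star[OF xS] t by auto
      have c: "((\<lambda>x. P (of_real t * x)) has_derivative (\<lambda>w. \<alpha> (of_real t * x) * (of_real t * w) + \<beta> (of_real t * x) * cnj (of_real t * w))) (at x within U)"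
        by (rule has_derivative_compose[of "\<lambda>x. of_real t * x" _ _ _ P, simplified o_def])
           (auto intro!: derivative_eq_intros has_derivative_at_withinI[OF DP[OF tS]])
      have "((\<lambda>x. Re (P (of_real t * x) * x)) has_derivative
            (\<lambda>w. Re ((\<alpha> (of_real t * x) * (of_real t * w) + \<beta> (of_real t * x) * cnj (of_real t * w)) * x + P (of_real t * x) * w))) (at x within U)"
        by (auto intro!: derivative_eq_intros c)
      moreover have "Re ((\<alpha> (of_real t * x) * (of_real t * w) + \<beta> (of_real t * x) * cnj (of_real t * w)) * x + P (of_real t * x) * w)
          = blinfun_apply (fx x t) w" for w
        using rb[OF tS] by (simp add: fx_apply K_def algebra_simps)
      ultimately show ?thesis by simp
    qed
    have int1: "(\<lambda>t. Re (P (of_real t * x) * x)) integrable_on cbox 0 1" if "x \<in> U" for x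
    proof (rule integrable_continuous)
      have xS: "x \<in> S" using that U by auto
      have im: "(\<lambda>t. of_real t * x) ` cbox 0 1 \<subseteq> S" using star[OF xS] by auto
      have "continuous_on (cbox 0 1) (\<lambda>t::real. P (of_real t * x))"
        by (rule continuous_on_compose2[OF cP _ im]) (intro continuous_intros)
      then show "continuous_on (cbox 0 1) (\<lambda>t. Re (P (of_real t * x) * x))"
        by (intro continuous_intros)
    qed
    have cfxU: "continuous_on (U \<times> cbox 0 1) (\<lambda>(x, t). fx x t)"
      by (rule continuous_on_subset[OF cfx]) (use U in auto)
    have L: "((\<lambda>x. integral (cbox 0 1) (\<lambda>t. Re (P (of_real t * x) * x))) has_derivative
             blinfun_apply (integral (cbox 0 1) (fx x0))) (at x0 within U)"
      by (rule leibniz_rule[OF der1 int1 cfxU U(2) U(1)])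
    have fx0int: "fx x0 integrable_on cbox 0 1"
    proof (rule integrable_continuous)
      have "continuous_on (cbox 0 1) (\<lambda>t. (\<lambda>(x, t). fx x t) (x0, t))"
        by (rule continuous_on_compose2[OF cfx]) (use x0 in \<open>auto intro!: continuous_intros\<close>)
      then show "continuous_on (cbox 0 1) (fx x0)" by simp
    qed
    have val: "blinfun_apply (integral (cbox 0 1) (fx x0)) w = Re (P x0 * w)" for w
    proof -
      have "blinfun_apply (integral (cbox 0 1) (fx x0)) w = integral {0..1} (\<lambda>t. Re (K x0 t * w))"
        by (subst blinfun_apply_integral[OF fx0int]) (simp add: fx_apply)
      also have "\<dots> = Re (P x0 * w)"
      proof -
        define F where "F t = t * Re (P (of_real t * x0) * w)" for t :: real
        have "((\<lambda>t. Re (K x0 t * w)) has_integral (F 1 - F 0)) {0..1}"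
        proof (rule fundamental_theorem_of_calculus)
          fix t :: real assume t: "t \<in> {0..1}"
          have tS: "of_real t * x0 \<in> S" using star[OF x0] t by auto
          have c: "((\<lambda>t. P (of_real t * x0)) has_derivative (\<lambda>h. \<alpha> (of_real t * x0) * (of_real h * x0) + \<beta> (of_real t * x0) * cnj (of_real h * x0))) (at t within {0..1})"
            by (rule has_derivative_compose[of "\<lambda>t. of_real t * x0" _ _ _ P, simplified o_def])
               (auto intro!: derivative_eq_intros has_derivative_at_withinI[OF DP[OF tS]])
          have "(F has_derivative (\<lambda>h. h * Re (P (of_real t * x0) * w) + t * Re ((\<alpha> (of_real t * x0) * (of_real h * x0) + \<beta> (of_real t * x0) * cnj (of_real h * x0)) * w))) (at t within {0..1})"
            unfolding F_def by (auto intro!: derivative_eq_intros c)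
          moreover have "h * Re (P (of_real t * x0) * w) + t * Re ((\<alpha> (of_real t * x0) * (of_real h * x0) + \<beta> (of_real t * x0) * cnj (of_real h * x0)) * w) = h *\<^sub>R Re (K x0 t * w)" for h
            by (simp add: K_def algebra_simps)
          ultimately show "(F has_vector_derivative Re (K x0 t * w)) (at t within {0..1})"
            unfolding has_vector_derivative_def by simp
        qed simp
        moreover have "F 1 - F 0 = Re (P x0 * w)" by (simp add: F_def)
        ultimately show ?thesis by (simp add: integral_unique)
      qed
      finally show ?thesis .
    qed
    have "(g has_derivative blinfun_apply (integral (cbox 0 1) (fx x0))) (at x0)"
      using L U at_within_open[OF U(2) U(3)] unfolding g_def by metis
    then show "(g has_derivative (\<lambda>w. Re (P x0 * w))) (at x0)"
    proof -
      have "blinfun_apply (integral (cbox 0 1) (fx x0)) = (\<lambda>w. Re (P x0 * w))"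
        by (rule ext, rule val)
      then show ?thesis using \<open>(g has_derivative blinfun_apply (integral (cbox 0 1) (fx x0))) (at x0)\<close> by simp
    qed
  qed
qed


lemma global_primitive_real:
  fixes P \<alpha> \<beta> :: "complex \<Rightarrow> complex" and S :: "complex set"
  assumes S: "open S" "simply_connected S"
    and DP: "\<And>z. z \<in> S \<Longrightarrow> (P has_derivative (\<lambda>w. \<alpha> z * w + \<beta> z * cnj w)) (at z)"
    and ca: "continuous_on S \<alpha>" and cb: "continuous_on S \<beta>"
    and rb: "\<And>z. z \<in> S \<Longrightarrow> Im (\<beta> z) = 0"
  shows "\<exists>g::complex\<Rightarrow>real. \<forall>z\<in>S. (g has_derivative (\<lambda>w. Re (P z * w))) (at z)"
proof -
  have cP: "continuous_on S P"
    using DP has_derivative_continuous continuous_at_imp_continuous_on by blast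
  consider "S = {}" | "S = UNIV" | "\<exists>f g. f holomorphic_on S \<and> g holomorphic_on ball 0 1 \<and>
           (\<forall>z \<in> S. f z \<in> ball 0 1 \<and> g(f z) = z) \<and>
           (\<forall>z \<in> ball 0 1. g z \<in> S \<and> f(g z) = z)"
    using Riemann_mapping_theorem S by blast
  then show ?thesis
  proof cases
    case 1 then show ?thesis by simp
  next
    case 2
    show ?thesis
      by (rule star_primitive[OF S(1) _ DP ca cb rb]) (simp_all add: 2)
  next
    case 3
    then obtain \<psi> \<phi> where hpsi: "\<psi> holomorphic_on S" and hphi: "\<phi> holomorphic_on ball 0 1"
      and psiS: "\<And>z. z \<in> S \<Longrightarrow> \<psi> z \<in> ball 0 1 \<and> \<phi> (\<psi> z) = z"
      and phiB: "\<And>z. z \<in> ball 0 1 \<Longrightarrow> \<phi> z \<in> S \<and> \<psi> (\<phi> z) = z"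
      by blast
    define B :: "complex set" where "B = ball 0 1"
    have oB: "open B" by (simp add: B_def)
    define \<phi>1 where "\<phi>1 = deriv \<phi>"
    define \<phi>2 where "\<phi>2 = deriv \<phi>1"
    have h1: "\<phi>1 holomorphic_on B" unfolding \<phi>1_def B_def using hphi by (simp add: holomorphic_deriv)
    have h2: "\<phi>2 holomorphic_on B" unfolding \<phi>2_def using h1 oB by (simp add: holomorphic_deriv)
    have d0: "(\<phi> has_field_derivative \<phi>1 w) (at w)" if "w \<in> B" for w
      using hphi that unfolding \<phi>1_def B_def by (simp add: holomorphic_derivI)
    have d1: "(\<phi>1 has_field_derivative \<phi>2 w) (at w)" if "w \<in> B" for w
      using h1 oB that unfolding \<phi>2_def by (simp add: holomorphic_derivI)
    have cphi: "continuous_on B \<phi>" using hphi by (simp add: B_def holomorphic_on_imp_continuous_on)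
    have imB: "\<phi> ` B \<subseteq> S" using phiB by (auto simp: B_def)
    define Q where "Q w = P (\<phi> w) * \<phi>1 w" for w
    define \<alpha>Q where "\<alpha>Q w = \<alpha> (\<phi> w) * (\<phi>1 w)^2 + P (\<phi> w) * \<phi>2 w" for w
    define \<beta>Q where "\<beta>Q w = \<beta> (\<phi> w) * \<phi>1 w * cnj (\<phi>1 w)" for w
    have DQ: "(Q has_derivative (\<lambda>a. \<alpha>Q w * a + \<beta>Q w * cnj a)) (at w)" if w: "w \<in> B" for w
    proof -
      have wS: "\<phi> w \<in> S" using imB w by auto
      have c: "((\<lambda>w. P (\<phi> w)) has_derivative (\<lambda>a. \<alpha> (\<phi> w) * (\<phi>1 w * a) + \<beta> (\<phi> w) * cnj (\<phi>1 w * a))) (at w)"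
        using has_derivative_compose[OF d0[OF w, unfolded has_field_derivative_def] DP[OF wS]]
        by (simp add: o_def)
      have "(Q has_derivative (\<lambda>a. (\<alpha> (\<phi> w) * (\<phi>1 w * a) + \<beta> (\<phi> w) * cnj (\<phi>1 w * a)) * \<phi>1 w + P (\<phi> w) * (\<phi>2 w * a))) (at w)"
        unfolding Q_def using has_derivative_mult[OF c d1[OF w, unfolded has_field_derivative_def]]
        by (simp add: algebra_simps)
      then show ?thesis
        by (rule has_derivative_eq_rhs) (simp add: fun_eq_iff \<alpha>Q_def \<beta>Q_def power2_eq_square algebra_simps)
    qed
    have c1: "continuous_on B \<phi>1" using h1 by (simp add: holomorphic_on_imp_continuous_on)
    have c2: "continuous_on B \<phi>2" using h2 by (simp add: holomorphic_on_imp_continuous_on)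
    have caQ: "continuous_on B \<alpha>Q" unfolding \<alpha>Q_def
      by (intro continuous_intros continuous_on_compose2[OF ca cphi imB] continuous_on_compose2[OF cP cphi imB] c1 c2)
    have cbQ: "continuous_on B \<beta>Q" unfolding \<beta>Q_def
      by (intro continuous_intros continuous_on_compose2[OF cb cphi imB] c1)
    have rbQ: "Im (\<beta>Q w) = 0" if "w \<in> B" for w
    proof -
      have "Im (\<beta> (\<phi> w)) = 0" using rb imB that by auto
      then show ?thesis by (simp add: \<beta>Q_def algebra_simps)
    qed
    have starB: "of_real t * z \<in> B" if "z \<in> B" "0 \<le> t" "t \<le> 1" for z t
    proof -
      have "norm (of_real t * z) = t * norm z" using that by (simp add: norm_mult)
      also have "\<dots> \<le> norm z" using that by (simp add: mult_left_le_one_le)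
      finally show ?thesis using that by (simp add: B_def)
    qed
    obtain G :: "complex \<Rightarrow> real" where G: "\<And>w. w \<in> B \<Longrightarrow> (G has_derivative (\<lambda>a. Re (Q w * a))) (at w)"
      using star_primitive[OF oB starB DQ caQ cbQ rbQ] by blast
    show ?thesis
    proof (intro exI[of _ "\<lambda>z. G (\<psi> z)"] ballI)
      fix z assume z: "z \<in> S"
      have pz: "\<psi> z \<in> B" using psiS z by (simp add: B_def)
      have dpsi: "(\<psi> has_field_derivative deriv \<psi> z) (at z)"
        using hpsi S(1) z by (simp add: holomorphic_derivI)
      have inv: "\<phi>1 (\<psi> z) * deriv \<psi> z = 1"
      proof -
        have a: "((\<lambda>x. \<phi> (\<psi> x)) has_field_derivative \<phi>1 (\<psi> z) * deriv \<psi> z) (at z)"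
          using DERIV_chain[OF d0[OF pz] dpsi] by (simp add: o_def)
        have b: "((\<lambda>x. \<phi> (\<psi> x)) has_field_derivative 1) (at z)"
          by (rule has_field_derivative_transform_within_open[OF DERIV_ident S(1) z]) (use psiS in simp)
        show ?thesis using DERIV_unique[OF a b] .
      qed
      have "((\<lambda>z. G (\<psi> z)) has_derivative (\<lambda>a. Re (Q (\<psi> z) * (deriv \<psi> z * a)))) (at z)"
        using has_derivative_compose[OF dpsi[unfolded has_field_derivative_def] G[OF pz]]
        by (simp add: o_def)
      moreover have "Q (\<psi> z) * (deriv \<psi> z * a) = P z * a" for a
      proof -
        have "Q (\<psi> z) * (deriv \<psi> z * a) = P (\<phi> (\<psi> z)) * (\<phi>1 (\<psi> z) * deriv \<psi> z) * a"
          by (simp add: Q_def algebra_simps)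
        then show ?thesis using inv psiS z by simp
      qed
      ultimately show "((\<lambda>z. G (\<psi> z)) has_derivative (\<lambda>w. Re (P z * w))) (at z)" by simp
    qed
  qed
qed


lemma pd_of_real:
  fixes F :: "complex \<Rightarrow> real"
  assumes "F differentiable (at z)"
  shows "pd (\<lambda>x. complex_of_real (F x)) w z = of_real (pd F w z)"
proof -
  have "(F has_derivative frechet_derivative F (at z)) (at z)"
    using assms frechet_derivative_works by blast
  then have "((\<lambda>x. complex_of_real (F x)) has_derivative (\<lambda>w. of_real (frechet_derivative F (at z) w))) (at z)"
    by (auto intro!: derivative_eq_intros)
  then have "pd (\<lambda>x. complex_of_real (F x)) w z = of_real (frechet_derivative F (at z) w)" by (rule pd_at)
  then show ?thesis by (simp add: pd_def)
qed

lemma pd_works: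
  assumes "f differentiable (at z)"
  shows "(f has_derivative (\<lambda>w. pd f w z)) (at z)"
  using assms frechet_derivative_works unfolding pd_def by (metis eta_contract_eq)

lemma C2_diff:
  assumes "open \<Omega>" "C2_on \<Omega> f" "z \<in> \<Omega>"
  shows "f differentiable (at z)" "pd f 1 differentiable (at z)" "pd f \<i> differentiable (at z)"
  using assms by (auto simp: C2_on_def differentiable_on_eq_differentiable_at)

lemma C2_cont:
  assumes "C2_on \<Omega> f" "w \<in> {1, \<i>}" "w' \<in> {1, \<i>}"
  shows "continuous_on \<Omega> (pd (pd f w) w')"
  using assms by (auto simp: C2_on_def)

lemma C2_cont1:
  assumes "open \<Omega>" "C2_on \<Omega> f" "w \<in> {1, \<i>}"
  shows "continuous_on \<Omega> (pd f w)"
  using assms by (auto simp: C2_on_def intro: differentiable_imp_continuous_on)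

definition DF0 :: "(complex \<Rightarrow> real) \<Rightarrow> complex \<Rightarrow> complex" where
  "DF0 F z = (of_real (pd F 1 z) - \<i> * of_real (pd F \<i> z)) / 2"

definition DzF :: "(complex \<Rightarrow> real) \<Rightarrow> complex \<Rightarrow> complex" where
  "DzF F = Dz (\<lambda>x. complex_of_real (F x))"

lemma DzF_eq:
  assumes "open \<Omega>" "C2_on \<Omega> F" "z \<in> \<Omega>"
  shows "DzF F z = DF0 F z"
  using C2_diff[OF assms] by (simp add: DzF_def Dz_def DF0_def pd_of_real)

lemma DF0_deriv:
  assumes "open \<Omega>" "C2_on \<Omega> F" "z \<in> \<Omega>"
  shows "(DF0 F has_derivative (\<lambda>w. (of_real (pd (pd F 1) w z) - \<i> * of_real (pd (pd F \<i>) w z)) / 2)) (at z)"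
proof -
  have a: "(pd F 1 has_derivative (\<lambda>w. pd (pd F 1) w z)) (at z)"
    using pd_works C2_diff(2)[OF assms] by blast
  have b: "(pd F \<i> has_derivative (\<lambda>w. pd (pd F \<i>) w z)) (at z)"
    using pd_works C2_diff(3)[OF assms] by blast
  show ?thesis unfolding DF0_def[abs_def]
    by (auto intro!: derivative_eq_intros a b)
qed

lemma DzF_deriv:
  assumes "open \<Omega>" "C2_on \<Omega> F" "z \<in> \<Omega>"
  shows "(DzF F has_derivative (\<lambda>w. (of_real (pd (pd F 1) w z) - \<i> * of_real (pd (pd F \<i>) w z)) / 2)) (at z)"
  by (rule has_derivative_transform_within_open[OF DF0_deriv[OF assms] assms(1) assms(3)])
     (use DzF_eq[OF assms(1,2)] in auto)

lemma DzF_diff: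
  assumes "open \<Omega>" "C2_on \<Omega> F" "z \<in> \<Omega>"
  shows "DzF F differentiable (at z)"
  using DzF_deriv[OF assms] unfolding differentiable_def by blast

lemma DzF_DzDzbar:
  assumes "open \<Omega>" "C2_on \<Omega> F" "z \<in> \<Omega>"
  shows "Dz (DzF F) z = ((of_real (pd (pd F 1) 1 z) - \<i> * of_real (pd (pd F \<i>) 1 z)) - \<i> * (of_real (pd (pd F 1) \<i> z) - \<i> * of_real (pd (pd F \<i>) \<i> z))) / 4"
    and "Dzbar (DzF F) z = ((of_real (pd (pd F 1) 1 z) - \<i> * of_real (pd (pd F \<i>) 1 z)) + \<i> * (of_real (pd (pd F 1) \<i> z) - \<i> * of_real (pd (pd F \<i>) \<i> z))) / 4"
  unfolding Dz_def Dzbar_def pd_at[OF DzF_deriv[OF assms]] by (simp_all add: field_simps)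

lemma DzF_cont:
  assumes "open \<Omega>" "C2_on \<Omega> F"
  shows "continuous_on \<Omega> (Dz (DzF F))" "continuous_on \<Omega> (Dzbar (DzF F))" "continuous_on \<Omega> (DzF F)"
proof -
  have c: "continuous_on \<Omega> (pd (pd F w) w')" if "w \<in> {1, \<i>}" "w' \<in> {1, \<i>}" for w w'
    using C2_cont[OF assms(2) that] .
  note cs = c[of 1 1] c[of 1 \<i>] c[of \<i> 1] c[of \<i> \<i>]
  show "continuous_on \<Omega> (Dz (DzF F))"
    by (rule continuous_on_eq[OF _ DzF_DzDzbar(1)[OF assms, symmetric]])
       (use cs in \<open>auto intro!: continuous_intros\<close>)
  show "continuous_on \<Omega> (Dzbar (DzF F))"
    by (rule continuous_on_eq[OF _ DzF_DzDzbar(2)[OF assms, symmetric]])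
       (use cs in \<open>auto intro!: continuous_intros\<close>)
  have c1: "continuous_on \<Omega> (pd F w)" if "w \<in> {1, \<i>}" for w
    using C2_cont1[OF assms that] .
  show "continuous_on \<Omega> (DzF F)"
    by (rule continuous_on_eq[of _ "DF0 F"], unfold DF0_def)
       (use c1[of 1] c1[of \<i>] DzF_eq[OF assms] in \<open>auto intro!: continuous_intros simp: DF0_def\<close>)
qed

lemma DzF_real:
  assumes "open \<Omega>" "C2_on \<Omega> F" "z \<in> \<Omega>"
  shows "Im (Dzbar (DzF F) z) = 0"
proof -
  have D: "\<And>x. x \<in> \<Omega> \<Longrightarrow> (F has_derivative (\<lambda>w. Re w * pd F 1 x + Im w * pd F \<i> x)) (at x)"
  proof -
    fix x assume x: "x \<in> \<Omega>"
    have der: "(F has_derivative (\<lambda>w. pd F w x)) (at x)" using pd_works C2_diff(1)[OF assms(1,2) x] by blast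
    have lin: "linear (\<lambda>w. pd F w x)" using der has_derivative_linear by blast
    have e: "(\<lambda>w. pd F w x) = (\<lambda>w. Re w * pd F 1 x + Im w * pd F \<i> x)"
    proof (rule ext)
      fix w show "pd F w x = Re w * pd F 1 x + Im w * pd F \<i> x"
        using complex_lin[OF lin, of w] by simp
    qed
    show "(F has_derivative (\<lambda>w. Re w * pd F 1 x + Im w * pd F \<i> x)) (at x)"
      using der unfolding e .
  qed
  have a: "(pd F 1 has_derivative (\<lambda>w. pd (pd F 1) w z)) (at z)"
    using pd_works C2_diff(2)[OF assms] by blast
  have b: "(pd F \<i> has_derivative (\<lambda>w. pd (pd F \<i>) w z)) (at z)"
    using pd_works C2_diff(3)[OF assms] by blast
  have "pd (pd F 1) \<i> z = pd (pd F \<i>) 1 z"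
    using schwarz[OF assms(1) assms(3) D a b] by simp
  then show ?thesis by (simp add: DzF_DzDzbar(2)[OF assms] Im_divide)
qed

lemma exp_ident1:
  fixes \<tau> :: real and h :: complex
  shows "exp (\<i> * \<tau>) * of_real (Re h) - (exp (\<i> * \<tau>) - exp (- \<i> * \<tau>)) / 2 * h = of_real (Re (exp (- \<i> * \<tau>) * h))"
proof -
  have e1: "exp (\<i> * \<tau>) = cis \<tau>" by (simp add: cis_conv_exp)
  have e2: "exp (- \<i> * \<tau>) = cis (-\<tau>)" by (simp add: cis_conv_exp)
  show ?thesis unfolding e1 e2 by (simp add: complex_eq_iff algebra_simps)
qed

lemma exp_ident2:
  fixes \<tau> :: real and h A B :: complex
  shows "exp (\<i> * \<tau>) * A - (exp (\<i> * \<tau>) - exp (- \<i> * \<tau>)) / 2 * h * B - of_real (Re (exp (- \<i> * \<tau>) * h)) * B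
     = exp (\<i> * \<tau>) * (A - of_real (Re h) * B)"
proof -
  have "of_real (Re (exp (- \<i> * \<tau>) * h)) = exp (\<i> * \<tau>) * of_real (Re h) - (exp (\<i> * \<tau>) - exp (- \<i> * \<tau>)) / 2 * h"
    using exp_ident1 by simp
  then show ?thesis unfolding \<open>of_real (Re (exp (- \<i> * \<tau>) * h)) = _\<close> by (simp add: algebra_simps)
qed


lemma C2_cmult:
  fixes f :: "complex \<Rightarrow> complex"
  assumes O: "open \<Omega>" and C: "C2_on \<Omega> f"
  shows "C2_on \<Omega> (\<lambda>z. k * f z)"
proof -
  have pdk: "pd (\<lambda>z. k * f z) w z = k * pd f w z" if z: "z \<in> \<Omega>" for w z
  proof -
    have "(f has_derivative (\<lambda>w. pd f w z)) (at z)" using pd_works C2_diff(1)[OF O C z] by blast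
    then have "((\<lambda>z. k * f z) has_derivative (\<lambda>w. k * pd f w z)) (at z)" by (rule has_derivative_mult_right)
    then show ?thesis by (rule pd_at)
  qed
  have d0: "(\<lambda>z. k * f z) differentiable_on \<Omega>"
  proof (rule differentiable_at_imp_differentiable_on)
    fix z assume z: "z \<in> \<Omega>"
    show "(\<lambda>z. k * f z) differentiable (at z)"
      using C2_diff(1)[OF O C z] unfolding differentiable_def by (blast intro: has_derivative_mult_right)
  qed
  have d1: "pd (\<lambda>z. k * f z) w differentiable_on \<Omega>" if w: "w \<in> {1, \<i>}" for w
  proof (rule differentiable_at_imp_differentiable_on)
    fix z assume z: "z \<in> \<Omega>"
    have "pd f w differentiable (at z)" using C2_diff(2,3)[OF O C z] w by auto
    then have "(\<lambda>x. k * pd f w x) differentiable (at z)"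
      unfolding differentiable_def by (blast intro: has_derivative_mult_right)
    then show "pd (\<lambda>z. k * f z) w differentiable (at z)"
      by (rule diff_cong[OF O z, rotated]) (simp add: pdk)
  qed
  have c2: "continuous_on \<Omega> (pd (pd (\<lambda>z. k * f z) w) w')" if w: "w \<in> {1, \<i>}" "w' \<in> {1, \<i>}" for w w'
  proof (rule continuous_on_eq)
    show "continuous_on \<Omega> (\<lambda>z. k * pd (pd f w) w' z)"
      using C2_cont[OF C w] by (intro continuous_intros)
    fix z assume z: "z \<in> \<Omega>"
    have "pd (pd (\<lambda>z. k * f z) w) w' z = pd (\<lambda>x. k * pd f w x) w' z"
      by (rule pd_cong[OF O z]) (simp add: pdk)
    also have "\<dots> = k * pd (pd f w) w' z"
    proof -
      have "pd f w differentiable (at z)" using C2_diff(2,3)[OF O C z] w by auto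
      then have "(pd f w has_derivative (\<lambda>v. pd (pd f w) v z)) (at z)" by (rule pd_works)
      then have "((\<lambda>x. k * pd f w x) has_derivative (\<lambda>v. k * pd (pd f w) v z)) (at z)" by (rule has_derivative_mult_right)
      then show ?thesis by (rule pd_at)
    qed
    finally show "k * pd (pd f w) w' z = pd (pd (\<lambda>z. k * f z) w) w' z" by simp
  qed
  show ?thesis unfolding C2_on_def using d0 d1 c2 by blast
qed

lemma wirt_real:
  fixes p w :: complex
  shows "complex_of_real (Re (p * w)) = p / 2 * w + cnj p / 2 * cnj w"
  by (simp add: complex_eq_iff field_simps)

theorem mainTheorem4:
  fixes \<Omega> :: "complex set" and h :: "complex \<Rightarrow> complex" and M N :: "complex \<Rightarrow> real"
    and \<tau> :: real
  assumes "open \<Omega>" and "connected \<Omega>" and "simply_connected \<Omega>"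
    and "weierstrass_data_2 \<Omega> h M N"
  shows "(\<exists>M\<tau> :: complex \<Rightarrow> real. C2_on \<Omega> M\<tau> \<and>
            (\<forall>z \<in> \<Omega>. Dz (\<lambda>x. complex_of_real (M\<tau> x)) z
               = exp (\<i> * \<tau>) * Dz (\<lambda>x. complex_of_real (M x)) z
                 - (exp (\<i> * \<tau>) - exp (- \<i> * \<tau>)) / 2 * h z * Dz (\<lambda>x. complex_of_real (N x)) z))
       \<and> (\<forall>M\<tau> :: complex \<Rightarrow> real. C2_on \<Omega> M\<tau> \<and>
            (\<forall>z \<in> \<Omega>. Dz (\<lambda>x. complex_of_real (M\<tau> x)) z
               = exp (\<i> * \<tau>) * Dz (\<lambda>x. complex_of_real (M x)) z
                 - (exp (\<i> * \<tau>) - exp (- \<i> * \<tau>)) / 2 * h z * Dz (\<lambda>x. complex_of_real (N x)) z)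
            \<longrightarrow> weierstrass_data_2 \<Omega> (\<lambda>z. exp (- \<i> * \<tau>) * h z) M\<tau> N)"
proof -
  note O = assms(1)
  have Ch: "C2_on \<Omega> h" and CM: "C2_on \<Omega> M" and CN: "C2_on \<Omega> N"
    and hnz: "\<And>z. z \<in> \<Omega> \<Longrightarrow> h z \<noteq> 0"
    and hol: "\<And>z. z \<in> \<Omega> \<Longrightarrow> Dzbar h z = 0"
    and hyp: "\<And>z. z \<in> \<Omega> \<Longrightarrow> Dzbar (DzF M) z = of_real (Re (h z)) * Dzbar (DzF N) z"
    and nd: "\<And>z. z \<in> \<Omega> \<Longrightarrow> DzF M z - of_real (Re (h z)) * DzF N z \<noteq> 0"
    using assms(4) unfolding weierstrass_data_2_def DzF_def by auto
  define E where "E = exp (\<i> * complex_of_real \<tau>)"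
  define c where "c = (exp (\<i> * complex_of_real \<tau>) - exp (- \<i> * complex_of_real \<tau>)) / 2"
  define G where "G z = E * DzF M z - c * h z * DzF N z" for z
  define \<alpha>G where "\<alpha>G z = E * Dz (DzF M) z - c * (Dz h z * DzF N z + h z * Dz (DzF N) z)" for z
  define \<beta>G where "\<beta>G z = E * Dzbar (DzF M) z - c * (Dzbar h z * DzF N z + h z * Dzbar (DzF N) z)" for z
  have dG: "(G has_derivative (\<lambda>w. \<alpha>G z * w + \<beta>G z * cnj w)) (at z)" if z: "z \<in> \<Omega>" for z
  proof -
    have dM: "(DzF M has_derivative (\<lambda>w. Dz (DzF M) z * w + Dzbar (DzF M) z * cnj w)) (at z)"
      by (rule wirt_of_diff[OF DzF_diff[OF O CM z]])
    have dN: "(DzF N has_derivative (\<lambda>w. Dz (DzF N) z * w + Dzbar (DzF N) z * cnj w)) (at z)"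
      by (rule wirt_of_diff[OF DzF_diff[OF O CN z]])
    have dh: "(h has_derivative (\<lambda>w. Dz h z * w + Dzbar h z * cnj w)) (at z)"
      by (rule wirt_of_diff[OF C2_diff(1)[OF O Ch z]])
    show ?thesis unfolding G_def[abs_def]
      by (rule has_derivative_eq_rhs, (rule derivative_intros dM dN dh)+)
         (simp add: fun_eq_iff \<alpha>G_def \<beta>G_def algebra_simps)
  qed
  have key\<beta>: "\<beta>G z = of_real (Re (exp (- \<i> * \<tau>) * h z)) * Dzbar (DzF N) z" if z: "z \<in> \<Omega>" for z
  proof -
    have "\<beta>G z = (E * of_real (Re (h z)) - c * h z) * Dzbar (DzF N) z"
      using hyp[OF z] hol[OF z] by (simp add: \<beta>G_def algebra_simps)
    then show ?thesis using exp_ident1[of \<tau> "h z"] by (simp add: E_def c_def)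
  qed
  have Gdef: "\<And>z. exp (\<i> * \<tau>) * Dz (\<lambda>x. complex_of_real (M x)) z
                 - (exp (\<i> * \<tau>) - exp (- \<i> * \<tau>)) / 2 * h z * Dz (\<lambda>x. complex_of_real (N x)) z = G z"
    by (simp add: G_def E_def c_def DzF_def)
  show ?thesis
    unfolding Gdef
  proof (intro conjI allI impI)
    define P where "P z = 2 * G z" for z
    have dP: "(P has_derivative (\<lambda>w. (2 * \<alpha>G z) * w + (2 * \<beta>G z) * cnj w)) (at z)" if "z \<in> \<Omega>" for z
      unfolding P_def[abs_def] using has_derivative_mult_right[OF dG[OF that], of 2]
      by (simp add: algebra_simps)
    have ch: "continuous_on \<Omega> h" using Ch by (auto simp: C2_on_def intro: differentiable_imp_continuous_on)
    have cDzh: "continuous_on \<Omega> (Dz h)" and cDzbh: "continuous_on \<Omega> (Dzbar h)"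
    proof -
      have "continuous_on \<Omega> (pd h 1)" "continuous_on \<Omega> (pd h \<i>)" using C2_cont1[OF O Ch] by auto
      then show "continuous_on \<Omega> (Dz h)" "continuous_on \<Omega> (Dzbar h)"
        unfolding Dz_def[abs_def] Dzbar_def[abs_def] by (auto intro!: continuous_intros)
    qed
    have ca0: "continuous_on \<Omega> \<alpha>G" unfolding \<alpha>G_def[abs_def]
      using DzF_cont[OF O CM] DzF_cont[OF O CN] ch cDzh by (intro continuous_intros) auto
    have cb0: "continuous_on \<Omega> \<beta>G" unfolding \<beta>G_def[abs_def]
      using DzF_cont[OF O CM] DzF_cont[OF O CN] ch cDzbh by (intro continuous_intros) auto
    have ca: "continuous_on \<Omega> (\<lambda>z. 2 * \<alpha>G z)" using ca0 by (intro continuous_intros)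
    have cb: "continuous_on \<Omega> (\<lambda>z. 2 * \<beta>G z)" using cb0 by (intro continuous_intros)
    have rb: "Im (2 * \<beta>G z) = 0" if z: "z \<in> \<Omega>" for z
      using key\<beta>[OF z] DzF_real[OF O CN z] by simp
    obtain g :: "complex \<Rightarrow> real" where g: "\<And>z. z \<in> \<Omega> \<Longrightarrow> (g has_derivative (\<lambda>w. Re (P z * w))) (at z)"
      using global_primitive_real[OF O assms(3) dP ca cb rb] by blast
    have Dzg: "Dz (\<lambda>x. complex_of_real (g x)) z = G z" if z: "z \<in> \<Omega>" for z
    proof -
      have "((\<lambda>x. complex_of_real (g x)) has_derivative (\<lambda>w. complex_of_real (Re (P z * w)))) (at z)"
        using g[OF z] by (auto intro!: derivative_eq_intros)
      then have "((\<lambda>x. complex_of_real (g x)) has_derivative (\<lambda>w. P z / 2 * w + cnj (P z) / 2 * cnj w)) (at z)"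
        by (simp only: wirt_real)
      then show ?thesis using wirt_D(1) by (simp add: P_def)
    qed
    have pdg: "pd g w z = Re (P z * w)" if "z \<in> \<Omega>" for w z using pd_at[OF g[OF that]] .
    have dPz: "(\<lambda>x. Re (P x * w)) differentiable (at z)" if "z \<in> \<Omega>" for z w
      using dP[OF that] unfolding differentiable_def
      by (intro exI[of _ "\<lambda>v. Re ((2 * \<alpha>G z * v + 2 * \<beta>G z * cnj v) * w)"]) (auto intro!: derivative_eq_intros)
    have C2g: "C2_on \<Omega> g"
      unfolding C2_on_def
    proof (intro conjI ballI)
      show "g differentiable_on \<Omega>"
        using g by (intro differentiable_at_imp_differentiable_on) (auto simp: differentiable_def)
      fix w assume w: "w \<in> {1, \<i>}"
      show "pd g w differentiable_on \<Omega>"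
      proof (rule differentiable_at_imp_differentiable_on)
        fix z assume z: "z \<in> \<Omega>"
        show "pd g w differentiable (at z)"
          by (rule diff_cong[OF O z _ dPz[OF z]]) (simp add: pdg)
      qed
      fix w' assume w': "w' \<in> {1, \<i>}"
      show "continuous_on \<Omega> (pd (pd g w) w')"
      proof (rule continuous_on_eq)
        show "continuous_on \<Omega> (\<lambda>z. Re ((2 * \<alpha>G z * w' + 2 * \<beta>G z * cnj w') * w))"
          using ca0 cb0 by (intro continuous_intros) auto
        fix z assume z: "z \<in> \<Omega>"
        have "pd (pd g w) w' z = pd (\<lambda>x. Re (P x * w)) w' z"
          by (rule pd_cong[OF O z]) (simp add: pdg)
        also have "\<dots> = Re ((2 * \<alpha>G z * w' + 2 * \<beta>G z * cnj w') * w)"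
        proof -
          have "((\<lambda>x. Re (P x * w)) has_derivative (\<lambda>v. Re ((2 * \<alpha>G z * v + 2 * \<beta>G z * cnj v) * w))) (at z)"
            using dP[OF z] by (auto intro!: derivative_eq_intros)
          then show ?thesis by (rule pd_at)
        qed
        finally show "Re ((2 * \<alpha>G z * w' + 2 * \<beta>G z * cnj w') * w) = pd (pd g w) w' z" by simp
      qed
    qed
    show "\<exists>M\<tau>. C2_on \<Omega> M\<tau> \<and> (\<forall>z\<in>\<Omega>. Dz (\<lambda>x. complex_of_real (M\<tau> x)) z = G z)"
      using C2g Dzg by blast
  next
    fix M\<tau> :: "complex \<Rightarrow> real"
    assume A: "C2_on \<Omega> M\<tau> \<and> (\<forall>z\<in>\<Omega>. Dz (\<lambda>x. complex_of_real (M\<tau> x)) z = G z)"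
    then have CMt: "C2_on \<Omega> M\<tau>" and eqG: "\<And>z. z \<in> \<Omega> \<Longrightarrow> DzF M\<tau> z = G z"
      by (auto simp: DzF_def)
    have hol': "Dzbar (\<lambda>z. exp (- \<i> * \<tau>) * h z) z = 0" if z: "z \<in> \<Omega>" for z
    proof -
      have dh: "(h has_derivative (\<lambda>w. Dz h z * w + Dzbar h z * cnj w)) (at z)"
        by (rule wirt_of_diff[OF C2_diff(1)[OF O Ch z]])
      have "((\<lambda>z. exp (- \<i> * \<tau>) * h z) has_derivative (\<lambda>w. (exp (- \<i> * \<tau>) * Dz h z) * w + (exp (- \<i> * \<tau>) * Dzbar h z) * cnj w)) (at z)"
        using has_derivative_mult_right[OF dh, of "exp (- \<i> * \<tau>)"] by (simp add: algebra_simps)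
      from wirt_D(2)[OF this] show ?thesis using hol[OF z] by simp
    qed
    have eq2: "Dzbar (DzF M\<tau>) z = of_real (Re (exp (- \<i> * \<tau>) * h z)) * Dzbar (DzF N) z" if z: "z \<in> \<Omega>" for z
    proof -
      have "Dzbar (DzF M\<tau>) z = Dzbar G z"
        unfolding Dzbar_def using pd_cong[OF O z eqG] by simp
      also have "\<dots> = \<beta>G z" using wirt_D(2)[OF dG[OF z]] .
      finally show ?thesis using key\<beta>[OF z] by simp
    qed
    have nd2: "DzF M\<tau> z - of_real (Re (exp (- \<i> * \<tau>) * h z)) * DzF N z \<noteq> 0" if z: "z \<in> \<Omega>" for z
    proof -
      have "DzF M\<tau> z - of_real (Re (exp (- \<i> * \<tau>) * h z)) * DzF N z = E * (DzF M z - of_real (Re (h z)) * DzF N z)"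
        using eqG[OF z] exp_ident2[of \<tau> "DzF M z" "h z" "DzF N z"] by (simp add: G_def E_def c_def)
      then show ?thesis using nd[OF z] by (simp add: E_def)
    qed
    show "weierstrass_data_2 \<Omega> (\<lambda>z. exp (- \<i> * \<tau>) * h z) M\<tau> N"
      unfolding weierstrass_data_2_def
      using C2_cmult[OF O Ch] CMt CN hnz hol' eq2 nd2 by (simp add: DzF_def)
  qed
qed

end
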